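(* Let $A=\mathrm{diag}(G_1,\dots,G_m,[1])\in\mathbb{R}^{n\times n}$ (where the trailing block $[1]$ may or may not be present), with $G_j=\begin{bmatrix}c_j&s_j\\-s_j&c_j\end{bmatrix}$, $c_j^2+s_j^2=1$, $s_j\neq 0$, and $0<c_1<c_2<\cdots<c_m$. Let $v_0\in\mathbb{R}^n$ be a unit norm vector with $d(A,v_0)\geq 2$ and $v_0^{(1)}\neq 0$, and run the iteration ACI($1$) below. Then $\alpha_k\to c_1$ and $\beta_k\to c_1$, and every limit vector $v_*$ of $\{v_k\}$ satisfies $v_*^{(j)}=0$ for all blocks $j\geq 2$ and $\|v_*^{(1)}\|=1$.
   Context: Block partitioning: every $v\in\mathbb{R}^n$ is written as $v=[v^{(1)};\dots;v^{(m)};v^{(m+1)}]$ with $v^{(j)}\in\mathbb{R}^2$ for $j=1,\dots,m$ (conforming with the blocks $G_j$) and $v^{(m+1)}\in\mathbb{R}$ (present only if the block $[1]$ is present). ACI($1$): for $k=0,1,2,\dots$: $\widetilde w_k=(A-\alpha_kI)v_k$ with $\alpha_k=v_k^TAv_k$; $w_k=\widetilde w_k/\|\widetilde w_k\|$; $\widetilde v_{k+1}=(A^T-\beta_kI)w_k$ with $\beta_k=w_k^TAw_k$; $v_{k+1}=\widetilde v_{k+1}/\|\widetilde v_{k+1}\|$. $d(A,v)$ is the grade of $v$ w.r.t. $A$ (degree of the monic polynomial $p$ of smallest degree with $p(A)v=0$); $\|\cdot\|$ is the Euclidean norm. *)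

theory Defs
  imports Complex_Main "HOL-Computational_Algebra.Polynomial"
begin

text \<open>Vectors in R^n are functions nat => real, only the indices i < n matter.
  Matrices are functions nat => nat => real (entries (i,j), i,j < n). Indices are 0-based.\<close>

definition matvec :: "nat \<Rightarrow> (nat \<Rightarrow> nat \<Rightarrow> real) \<Rightarrow> (nat \<Rightarrow> real) \<Rightarrow> (nat \<Rightarrow> real)" where
  "matvec n M v = (\<lambda>i. if i < n then (\<Sum>j<n. M i j * v j) else 0)"

definition transp :: "(nat \<Rightarrow> nat \<Rightarrow> real) \<Rightarrow> (nat \<Rightarrow> nat \<Rightarrow> real)" where
  "transp M = (\<lambda>i j. M j i)"

definition vinner :: "nat \<Rightarrow> (nat \<Rightarrow> real) \<Rightarrow> (nat \<Rightarrow> real) \<Rightarrow> real" where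
  "vinner n u v = (\<Sum>i<n. u i * v i)"

definition vnorm :: "nat \<Rightarrow> (nat \<Rightarrow> real) \<Rightarrow> real" where
  "vnorm n v = sqrt (vinner n v v)"

definition poly_app :: "nat \<Rightarrow> (nat \<Rightarrow> nat \<Rightarrow> real) \<Rightarrow> real poly \<Rightarrow> (nat \<Rightarrow> real) \<Rightarrow> (nat \<Rightarrow> real)" where
  "poly_app n M p v = (\<lambda>i. \<Sum>k\<le>degree p. coeff p k * ((matvec n M ^^ k) v) i)"

definition grade :: "nat \<Rightarrow> (nat \<Rightarrow> nat \<Rightarrow> real) \<Rightarrow> (nat \<Rightarrow> real) \<Rightarrow> nat" where
  "grade n M v = (LEAST d. \<exists>p :: real poly. lead_coeff p = 1 \<and> degree p = d \<and>
                      (\<forall>i<n. poly_app n M p v i = 0))"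

text \<open>Block diagonal matrix diag(G_1,...,G_m,[1]) (trailing block present iff tr).
  Block j (1 \<le> j \<le> m) occupies 0-based indices 2(j-1), 2(j-1)+1;
  G_j = [[c_j, s_j], [-s_j, c_j]]; the trailing [1] sits at index 2m.\<close>
definition blockA :: "nat \<Rightarrow> bool \<Rightarrow> (nat \<Rightarrow> real) \<Rightarrow> (nat \<Rightarrow> real) \<Rightarrow> nat \<Rightarrow> nat \<Rightarrow> real" where
  "blockA m tr c s = (\<lambda>i j.
     if i < 2*m \<and> j < 2*m \<and> i div 2 = j div 2 then
       (if i = j then c (i div 2 + 1) else if even i then s (i div 2 + 1) else - s (i div 2 + 1))
     else if tr \<and> i = 2*m \<and> j = 2*m then 1 else 0)"

definition dimA :: "nat \<Rightarrow> bool \<Rightarrow> nat" where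
  "dimA m tr = 2*m + (if tr then 1 else 0)"

definition aci_half :: "nat \<Rightarrow> (nat \<Rightarrow> nat \<Rightarrow> real) \<Rightarrow> (nat \<Rightarrow> real) \<Rightarrow> real \<times> (nat \<Rightarrow> real)" where
  "aci_half n M v = (let a = vinner n v (matvec n M v);
                         wt = (\<lambda>i. matvec n M v i - a * v i)
                     in (a, (\<lambda>i. wt i / vnorm n wt)))"

fun aci_v :: "nat \<Rightarrow> (nat \<Rightarrow> nat \<Rightarrow> real) \<Rightarrow> (nat \<Rightarrow> real) \<Rightarrow> nat \<Rightarrow> (nat \<Rightarrow> real)" where
  "aci_v n M v0 0 = v0"
| "aci_v n M v0 (Suc k) =
     (let w = snd (aci_half n M (aci_v n M v0 k));
          b = vinner n w (matvec n M w);
          vt = (\<lambda>i. matvec n (transp M) w i - b * w i)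
      in (\<lambda>i. vt i / vnorm n vt))"

definition aci_alpha :: "nat \<Rightarrow> (nat \<Rightarrow> nat \<Rightarrow> real) \<Rightarrow> (nat \<Rightarrow> real) \<Rightarrow> nat \<Rightarrow> real" where
  "aci_alpha n M v0 k = fst (aci_half n M (aci_v n M v0 k))"

definition aci_w :: "nat \<Rightarrow> (nat \<Rightarrow> nat \<Rightarrow> real) \<Rightarrow> (nat \<Rightarrow> real) \<Rightarrow> nat \<Rightarrow> (nat \<Rightarrow> real)" where
  "aci_w n M v0 k = snd (aci_half n M (aci_v n M v0 k))"

definition aci_beta :: "nat \<Rightarrow> (nat \<Rightarrow> nat \<Rightarrow> real) \<Rightarrow> (nat \<Rightarrow> real) \<Rightarrow> nat \<Rightarrow> real" where
  "aci_beta n M v0 k = vinner n (aci_w n M v0 k) (matvec n M (aci_w n M v0 k))"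

end

theory Submission imports Defs begin

lemma sum_2m: "(\<Sum>i<2*m. F i) = (\<Sum>j<m. F (2*j) + F (2*j+1::nat)) " for F :: "nat \<Rightarrow> real"
  by (induction m) (simp_all add: add.commute add.left_commute)

lemma sum_dimA: "(\<Sum>i<dimA m tr. F i) = (\<Sum>j<m. F (2*j) + F (2*j+1)) + (if tr then F (2*m) else 0)" for F :: "nat \<Rightarrow> real"
  by (simp add: dimA_def sum_2m)

lemma mv_even: "j < m \<Longrightarrow> matvec (dimA m tr) (blockA m tr c s) v (2*j) = c (j+1) * v (2*j) + s (j+1) * v (2*j+1)"
proof -
  assume j: "j < m"
  have "2*j < dimA m tr" using j by (simp add: dimA_def)
  then have "matvec (dimA m tr) (blockA m tr c s) v (2*j) = (\<Sum>k<dimA m tr. blockA m tr c s (2*j) k * v k)"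
    by (simp add: matvec_def)
  also have "\<dots> = (\<Sum>q<m. if q = j then c (j+1) * v (2*j) + s (j+1) * v (2*j+1) else 0) + 0"
    unfolding sum_dimA using j by (intro arg_cong2[where f="(+)"] sum.cong) (auto simp: blockA_def)
  finally show ?thesis using j by simp
qed

lemma mv_odd: "j < m \<Longrightarrow> matvec (dimA m tr) (blockA m tr c s) v (2*j+1) = - s (j+1) * v (2*j) + c (j+1) * v (2*j+1)"
proof -
  assume j: "j < m"
  have "2*j+1 < dimA m tr" using j by (simp add: dimA_def)
  then have "matvec (dimA m tr) (blockA m tr c s) v (2*j+1) = (\<Sum>k<dimA m tr. blockA m tr c s (2*j+1) k * v k)"
    by (simp add: matvec_def)
  also have "\<dots> = (\<Sum>q<m. if q = j then - s (j+1) * v (2*j) + c (j+1) * v (2*j+1) else 0) + 0"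
    unfolding sum_dimA using j by (intro arg_cong2[where f="(+)"] sum.cong) (auto simp: blockA_def)
  finally show ?thesis using j by simp
qed

lemma mv_odd': "j < m \<Longrightarrow> matvec (dimA m tr) (blockA m tr c s) v (Suc (2*j)) = - s (j+1) * v (2*j) + c (j+1) * v (Suc (2*j))"
  using mv_odd by simp

lemma mv_tr: "tr \<Longrightarrow> matvec (dimA m tr) (blockA m tr c s) v (2*m) = v (2*m)"
proof -
  assume tr
  then have "2*m < dimA m tr" by (simp add: dimA_def)
  then have "matvec (dimA m tr) (blockA m tr c s) v (2*m) = (\<Sum>k<dimA m tr. blockA m tr c s (2*m) k * v k)"
    by (simp add: matvec_def)
  also have "\<dots> = v (2*m)"
    unfolding sum_dimA using \<open>tr\<close> by (auto simp: blockA_def)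
  finally show ?thesis .
qed

lemma odd_div_eq: "odd (i::nat) \<Longrightarrow> odd j \<Longrightarrow> j div 2 = i div 2 \<Longrightarrow> i = j"
  by (metis odd_two_times_div_two_succ)

lemma transp_blockA: "transp (blockA m tr c s) = blockA m tr c (\<lambda>j. - s j)"
  unfolding transp_def blockA_def
  apply (intro ext)
  apply (auto dest: odd_div_eq)
  done

definition cidx :: "nat \<Rightarrow> (nat \<Rightarrow> real) \<Rightarrow> nat \<Rightarrow> real" where
  "cidx m c i = (if i < 2*m then c (i div 2 + 1) else 1)"

definition ff :: "real \<Rightarrow> real \<Rightarrow> real" where
  "ff a x = 1 - 2*a*x + a^2"

lemma blk_alg:
  fixes h c s x y a :: real
  assumes "c^2 + s^2 = 1"
  shows "h*(c*x + s*y - a*x)^2 + h*(- s*x + c*y - a*y)^2 = h * ff a c * x^2 + h * ff a c * y^2"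
proof -
  have "h*(c*x + s*y - a*x)^2 + h*(- s*x + c*y - a*y)^2 = h*(c^2+s^2 - 2*a*c + a^2)*(x^2+y^2)"
    by (simp add: algebra_simps power2_eq_square)
  then show ?thesis using assms by (simp add: ff_def algebra_simps)
qed

lemma cidx_even[simp]: "j < m \<Longrightarrow> cidx m c (2*j) = c (j+1)"
  by (simp add: cidx_def)
lemma cidx_odd[simp]: "j < m \<Longrightarrow> cidx m c (2*j+1) = c (j+1)"
  by (simp add: cidx_def)
lemma cidx_odd'[simp]: "j < m \<Longrightarrow> cidx m c (Suc (2*j)) = c (j+1)"
  by (simp add: cidx_def)
lemma cidx_tr[simp]: "cidx m c (2*m) = 1"
  by (simp add: cidx_def)

lemma key:
  assumes csq: "\<And>j. j \<in> {1..m} \<Longrightarrow> (c j)^2 + (s j)^2 = 1"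
    and hb: "\<And>j. j < m \<Longrightarrow> h (2*j) = h (2*j+1)"
  shows "(\<Sum>i<dimA m tr. h i * (matvec (dimA m tr) (blockA m tr c s) v i - a * v i)^2)
       = (\<Sum>i<dimA m tr. h i * ff a (cidx m c i) * (v i)^2)"
  unfolding sum_dimA
proof (rule arg_cong2[where f="(+)"], rule sum.cong, rule refl)
  fix j assume "j \<in> {..<m}"
  then have j: "j < m" by simp
  have c: "(c (j+1))^2 + (s (j+1))^2 = 1" using csq j by simp
  show "h (2 * j) * (matvec (dimA m tr) (blockA m tr c s) v (2 * j) - a * v (2 * j))\<^sup>2 +
        h (2 * j + 1) * (matvec (dimA m tr) (blockA m tr c s) v (2 * j + 1) - a * v (2 * j + 1))\<^sup>2 =
        h (2 * j) * ff a (cidx m c (2 * j)) * (v (2 * j))\<^sup>2 +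
        h (2 * j + 1) * ff a (cidx m c (2 * j + 1)) * (v (2 * j + 1))\<^sup>2"
    using blk_alg[OF c, of "h (2*j)" "v (2*j)" "v (2*j+1)" a] j hb[OF j]
    by (simp add: mv_even mv_odd')
next
  show "(if tr then h (2 * m) * (matvec (dimA m tr) (blockA m tr c s) v (2 * m) - a * v (2 * m))\<^sup>2 else 0) =
        (if tr then h (2 * m) * ff a (cidx m c (2 * m)) * (v (2 * m))\<^sup>2 else 0)"
    by (cases tr) (simp_all add: mv_tr ff_def power2_eq_square, simp add: algebra_simps)
qed

lemma rayleigh:
  "vinner (dimA m tr) v (matvec (dimA m tr) (blockA m tr c s) v) = (\<Sum>i<dimA m tr. cidx m c i * (v i)^2)"
  unfolding vinner_def sum_dimA
  apply (rule arg_cong2[where f="(+)"], rule sum.cong, rule refl)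
   apply (simp add: mv_even mv_odd' power2_eq_square)
   apply (simp add: algebra_simps)
  apply (simp add: mv_tr power2_eq_square)
  done

lemma null_comp:
  fixes f g :: "nat \<Rightarrow> real"
  assumes "\<forall>k. norm (f k) \<le> g k" "g \<longlonglongrightarrow> 0"
  shows "f \<longlonglongrightarrow> 0"
proof (rule tendsto_0_le[OF assms(2), where K=1], rule always_eventually, rule allI)
  fix k show "norm (f k) \<le> norm (g k) * 1" using assms(1)[rule_format, of k] by simp
qed

lemma norm_scale:
  assumes "0 < vinner n u u"
  shows "(\<Sum>i<n. h i * (u i / vnorm n u)^2) = (\<Sum>i<n. h i * (u i)^2) / vinner n u u"
proof -
  have "(vnorm n u)^2 = vinner n u u" unfolding vnorm_def using assms by simp
  then show ?thesis by (simp add: power_divide sum_divide_distrib)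
qed

lemma vinner_sq: "vinner n v v = (\<Sum>i<n. 1 * (v i)^2)"
  by (simp add: vinner_def power2_eq_square)

locale ctx =
  fixes m :: nat and tr :: bool and c s :: "nat \<Rightarrow> real"
  assumes m1: "m \<ge> 1"
    and cs: "\<And>j. j \<in> {1..m} \<Longrightarrow> (c j)^2 + (s j)^2 = 1"
    and snz: "\<And>j. j \<in> {1..m} \<Longrightarrow> s j \<noteq> 0"
    and c1pos: "0 < c 1"
    and cmono: "\<And>i j. i \<in> {1..m} \<Longrightarrow> j \<in> {1..m} \<Longrightarrow> i < j \<Longrightarrow> c i < c j"
begin

abbreviation "n \<equiv> dimA m tr"
abbreviation "M \<equiv> blockA m tr c s"

definition Hs :: "(nat \<Rightarrow> real) \<Rightarrow> real" where
  "Hs v = (\<Sum>i<n. (if i < 2 then 1 else 0) * (v i)^2)"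
definition Ts :: "(nat \<Rightarrow> real) \<Rightarrow> real" where
  "Ts v = (\<Sum>i<n. (if 2 \<le> i then 1 else 0) * (v i)^2)"

definition "\<delta> = (if m \<ge> 2 then min (c 2 - c 1) (1 - c 1) else 1 - c 1)"
definition "\<rho> = 1 - c 1 * \<delta>"

lemma HT: "Hs v + Ts v = vinner n v v"
  unfolding Hs_def Ts_def vinner_sq sum.distrib[symmetric]
  by (rule sum.cong) auto

lemma Ts_nonneg: "0 \<le> Ts v"
  unfolding Ts_def by (rule sum_nonneg) auto

lemma c1_lt1: "c 1 < 1"
proof -
  have "(c 1)^2 + (s 1)^2 = 1" "s 1 \<noteq> 0" using cs snz m1 by auto
  then have "(c 1)^2 < 1" by (smt (verit) power2_less_0 zero_less_power2)
  then show ?thesis using c1pos by (smt (verit) one_le_power)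
qed

lemma c_bounds: "j \<in> {1..m} \<Longrightarrow> c 1 \<le> c j \<and> c j \<le> 1"
proof -
  assume j: "j \<in> {1..m}"
  have "c 1 \<le> c j" using cmono[of 1 j] j m1 by (cases "j = 1") auto
  moreover have "(c j)^2 \<le> 1" using cs[OF j] by (smt (verit) zero_le_power2)
  then have "c j \<le> 1" using abs_square_le_1 abs_le_D1 by blast
  ultimately show ?thesis by simp
qed

lemma cidx_bounds: "c 1 \<le> cidx m c i \<and> cidx m c i \<le> 1"
  unfolding cidx_def using c_bounds[of "i div 2 + 1"] c1_lt1 by auto

lemma delta_pos: "0 < \<delta>" and delta_le: "\<delta> \<le> 1 - c 1"
  using cmono[of 1 2] c1_lt1 unfolding \<delta>_def by auto

lemma cidx_tail: "2 \<le> i \<Longrightarrow> c 1 + \<delta> \<le> cidx m c i"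
proof (cases "i < 2*m")
  case True
  assume i: "2 \<le> i"
  define j where "j = i div 2 + 1"
  have j2: "2 \<le> j" "j \<le> m" using i True unfolding j_def by auto
  have "c 2 \<le> c j" using cmono[of 2 j] j2 by (cases "j = 2") auto
  moreover have "c 1 + \<delta> \<le> c 2" using j2 unfolding \<delta>_def by auto
  ultimately show ?thesis using True unfolding cidx_def j_def by simp
next
  case False
  then show ?thesis using delta_le unfolding cidx_def by simp
qed

lemma cidx_head: "i < 2 \<Longrightarrow> cidx m c i = c 1"
  using m1 unfolding cidx_def by auto

lemma ff_c1_pos: "0 < ff a (c 1)"
proof -
  have "(c 1)^2 + (s 1)^2 = 1" "s 1 \<noteq> 0" using cs snz m1 by auto
  then have "ff a (c 1) = (a - c 1)^2 + (s 1)^2" unfolding ff_def by (simp add: power2_eq_square algebra_simps)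
  then show ?thesis using \<open>s 1 \<noteq> 0\<close> by (smt (verit) zero_le_power2 zero_less_power2)
qed

lemma ff_ratio:
  assumes a: "c 1 \<le> a" "a \<le> 1" and x: "c 1 + \<delta> \<le> x"
  shows "ff a x \<le> \<rho> * ff a (c 1)"
proof -
  have "ff a x = ff a (c 1) - 2*a*(x - c 1)" unfolding ff_def by (simp add: algebra_simps)
  also have "\<dots> \<le> ff a (c 1) - 2 * c 1 * \<delta>"
  proof -
    have "c 1 * \<delta> \<le> a * (x - c 1)"
      using a x delta_pos c1pos by (intro mult_mono) auto
    then show ?thesis by simp
  qed
  also have "\<dots> \<le> \<rho> * ff a (c 1)"
  proof -
    have "ff a (c 1) \<le> 2" unfolding ff_def using a c1pos
      by (smt (verit) mult_nonneg_nonneg power_le_one)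
    then have "c 1 * \<delta> * ff a (c 1) \<le> c 1 * \<delta> * 2"
      using c1pos delta_pos by (intro mult_left_mono) auto
    then show ?thesis unfolding \<rho>_def by (simp add: algebra_simps)
  qed
  finally show ?thesis .
qed

lemma a_bounds:
  assumes vn: "vinner n v v = 1"
  shows "c 1 \<le> (\<Sum>i<n. cidx m c i * (v i)^2) \<and> (\<Sum>i<n. cidx m c i * (v i)^2) \<le> 1"
proof -
  have sq1: "(\<Sum>i<n. (v i)^2) = 1" using vn by (simp add: vinner_sq)
  have "c 1 = (\<Sum>i<n. c 1 * (v i)^2)" using sq1 by (simp add: sum_distrib_left[symmetric])
  also have "\<dots> \<le> (\<Sum>i<n. cidx m c i * (v i)^2)"
    using cidx_bounds by (intro sum_mono mult_right_mono) auto
  finally have 1: "c 1 \<le> (\<Sum>i<n. cidx m c i * (v i)^2)" .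
  have "(\<Sum>i<n. cidx m c i * (v i)^2) \<le> (\<Sum>i<n. 1 * (v i)^2)"
    using cidx_bounds by (intro sum_mono mult_right_mono) auto
  then show ?thesis using 1 sq1 by simp
qed

lemma step:
  assumes cs': "\<And>j. j\<in>{1..m} \<Longrightarrow> (c j)^2 + (s' j)^2 = 1"
    and vn: "vinner n v v = 1" and hp: "0 < Hs v"
    and a: "a = (\<Sum>i<n. cidx m c i * (v i)^2)"
    and u: "u = (\<lambda>i. matvec n (blockA m tr c s') v i - a * v i)"
    and v': "v' = (\<lambda>i. u i / vnorm n u)"
  shows "vinner n v' v' = 1 \<and> 0 < Hs v' \<and> Ts v' / Hs v' \<le> \<rho> * (Ts v / Hs v)"
proof -
  have ab: "c 1 \<le> a" "a \<le> 1" using a_bounds[OF vn] a by auto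
  have Hu: "Hs u = ff a (c 1) * Hs v"
  proof -
    have "Hs u = (\<Sum>i<n. (if i < 2 then 1 else 0) * ff a (cidx m c i) * (v i)^2)"
      unfolding Hs_def u by (rule key[OF cs']) auto
    also have "\<dots> = (\<Sum>i<n. ff a (c 1) * ((if i < 2 then 1 else 0) * (v i)^2))"
      by (rule sum.cong) (auto simp: cidx_head)
    finally show ?thesis unfolding Hs_def by (simp add: sum_distrib_left)
  qed
  have Tu: "Ts u \<le> \<rho> * ff a (c 1) * Ts v"
  proof -
    have "Ts u = (\<Sum>i<n. (if 2 \<le> i then 1 else 0) * ff a (cidx m c i) * (v i)^2)"
      unfolding Ts_def u by (rule key[OF cs']) auto
    also have "\<dots> \<le> (\<Sum>i<n. \<rho> * ff a (c 1) * ((if 2 \<le> i then 1 else 0) * (v i)^2))"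
      using ff_ratio[OF ab cidx_tail] by (intro sum_mono) (auto intro!: mult_right_mono)
    finally show ?thesis unfolding Ts_def by (simp add: sum_distrib_left)
  qed
  have ffp: "0 < ff a (c 1)" by (rule ff_c1_pos)
  have Hup: "0 < Hs u" using Hu ffp hp by simp
  have Vp: "0 < vinner n u u" using HT[of u] Ts_nonneg[of u] Hup by linarith
  have H': "Hs v' = Hs u / vinner n u u" unfolding Hs_def v' by (rule norm_scale[OF Vp])
  have T': "Ts v' = Ts u / vinner n u u" unfolding Ts_def v' by (rule norm_scale[OF Vp])
  have N': "vinner n v' v' = 1" unfolding vinner_sq v' norm_scale[OF Vp] using Vp
    by (simp add: vinner_sq)
  have "Ts v' / Hs v' = Ts u / Hs u" unfolding H' T' using Vp by simp
  also have "\<dots> \<le> \<rho> * ff a (c 1) * Ts v / Hs u"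
    using Tu Hup by (simp add: divide_right_mono)
  also have "\<dots> = \<rho> * (Ts v / Hs v)" using Hu ffp by simp
  finally show ?thesis using N' H' Hup Vp by simp
qed

lemma rho_nonneg: "0 \<le> \<rho>"
proof -
  have "c 1 * \<delta> \<le> 1 * 1" using c1pos delta_pos delta_le c1_lt1 by (intro mult_mono) auto
  then show ?thesis unfolding \<rho>_def by simp
qed

lemma rho_lt1: "\<rho> < 1"
  unfolding \<rho>_def using c1pos delta_pos by simp

definition "Q v = Ts v / Hs v"

lemma wstep:
  assumes "vinner n v v = 1" "0 < Hs v"
  shows "vinner n (snd (aci_half n M v)) (snd (aci_half n M v)) = 1 \<and> 0 < Hs (snd (aci_half n M v))
     \<and> Q (snd (aci_half n M v)) \<le> \<rho> * Q v"
  unfolding Q_def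
  by (rule step[OF cs assms rayleigh[where s=s] refl]) (simp_all add: aci_half_def Let_def)

lemma vstep:
  assumes "vinner n w w = 1" "0 < Hs w" and that: "w = aci_w n M v0 k"
  shows "vinner n (aci_v n M v0 (Suc k)) (aci_v n M v0 (Suc k)) = 1 \<and> 0 < Hs (aci_v n M v0 (Suc k))
     \<and> Q (aci_v n M v0 (Suc k)) \<le> \<rho> * Q w"
  unfolding Q_def
  apply (rule step[of "\<lambda>j. - s j", OF _ assms(1,2) rayleigh[where s=s] refl])
   apply (simp add: cs)
  apply (simp add: that aci_w_def aci_half_def Let_def transp_blockA)
  done

lemma invariant:
  assumes "vinner n v0 v0 = 1" "0 < Hs v0"
  shows "vinner n (aci_v n M v0 k) (aci_v n M v0 k) = 1 \<and> 0 < Hs (aci_v n M v0 k)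
     \<and> Q (aci_v n M v0 k) \<le> \<rho>^(2*k) * Q v0
     \<and> vinner n (aci_w n M v0 k) (aci_w n M v0 k) = 1 \<and> 0 < Hs (aci_w n M v0 k)
     \<and> Q (aci_w n M v0 k) \<le> \<rho>^(2*k+1) * Q v0"
proof (induction k)
  case 0
  have a0: "aci_v n M v0 0 = v0" by simp
  show ?case using wstep[OF assms] assms unfolding aci_w_def a0 by (simp only: mult_zero_right power_0 power_one_right mult_1 add_0 simp_thms)
next
  case (Suc k)
  let ?w = "aci_w n M v0 k"
  let ?v = "aci_v n M v0 (Suc k)"
  from Suc.IH have IH1: "vinner n ?w ?w = 1" and IH2: "0 < Hs ?w" and IH3: "Q ?w \<le> \<rho>^(2*k+1) * Q v0"
    by blast+
  have V: "vinner n ?v ?v = 1" "0 < Hs ?v" "Q ?v \<le> \<rho> * Q ?w"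
    using vstep[OF IH1 IH2 refl] by blast+
  have W: "vinner n (aci_w n M v0 (Suc k)) (aci_w n M v0 (Suc k)) = 1" "0 < Hs (aci_w n M v0 (Suc k))"
     "Q (aci_w n M v0 (Suc k)) \<le> \<rho> * Q ?v"
    using wstep[OF V(1,2)] unfolding aci_w_def by blast+
  have "Q ?v \<le> \<rho> * (\<rho>^(2*k+1) * Q v0)"
    by (rule order_trans[OF V(3) mult_left_mono[OF IH3 rho_nonneg]])
  also have "\<rho> * (\<rho>^(2*k+1) * Q v0) = \<rho>^(2*Suc k) * Q v0" by (simp add: mult.assoc)
  finally have Qv: "Q ?v \<le> \<rho>^(2*Suc k) * Q v0" .
  have "Q (aci_w n M v0 (Suc k)) \<le> \<rho> * (\<rho>^(2*Suc k) * Q v0)"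
    by (rule order_trans[OF W(3) mult_left_mono[OF Qv rho_nonneg]])
  also have "\<rho> * (\<rho>^(2*Suc k) * Q v0) = \<rho>^(2*Suc k+1) * Q v0" by (simp add: mult.assoc)
  finally have "Q (aci_w n M v0 (Suc k)) \<le> \<rho>^(2*Suc k+1) * Q v0" .
  then show ?case using V W Qv by blast
qed

lemma n_ge2: "2 \<le> n" using m1 by (simp add: dimA_def)

lemma Hs_eq: "Hs v = (v 0)^2 + (v 1)^2"
proof -
  have "Hs v = (\<Sum>i<n. if i \<in> {..<2} then (v i)^2 else 0)"
    unfolding Hs_def by (rule sum.cong) auto
  also have "\<dots> = sum (\<lambda>i. (v i)^2) ({..<n} \<inter> {..<2})"
    by (simp add: sum.inter_restrict)
  also have "{..<n} \<inter> {..<2} = {..<2}" using n_ge2 by auto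
  finally show ?thesis by (simp add: numeral_2_eq_2)
qed

lemma Ts_le_Q: assumes "vinner n v v = 1" "0 < Hs v" shows "Ts v \<le> Q v"
proof -
  have h1: "Hs v \<le> 1" using HT[of v] Ts_nonneg[of v] assms by linarith
  have "Ts v * Hs v \<le> Ts v * 1" using Ts_nonneg[of v] h1 by (intro mult_left_mono) auto
  then show ?thesis unfolding Q_def using assms(2) by (simp add: le_divide_eq)
qed

lemma ray_bound:
  assumes vn: "vinner n v v = 1"
  shows "\<bar>(\<Sum>i<n. cidx m c i * (v i)^2) - c 1\<bar> \<le> Ts v"
proof -
  have sq1: "(\<Sum>i<n. (v i)^2) = 1" using vn by (simp add: vinner_sq)
  have e: "(\<Sum>i<n. cidx m c i * (v i)^2) - c 1 = (\<Sum>i<n. (cidx m c i - c 1) * (v i)^2)"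
    using sq1 by (simp add: algebra_simps sum_subtractf sum_distrib_left[symmetric])
  have lo: "0 \<le> (\<Sum>i<n. (cidx m c i - c 1) * (v i)^2)"
    using cidx_bounds by (intro sum_nonneg mult_nonneg_nonneg) auto
  have hi: "(\<Sum>i<n. (cidx m c i - c 1) * (v i)^2) \<le> Ts v"
    unfolding Ts_def
  proof (rule sum_mono)
    fix i
    have "cidx m c i - c 1 \<le> (if 2 \<le> i then 1 else 0)"
      using cidx_bounds[of i] cidx_head[of i] c1pos by auto
    then show "(cidx m c i - c 1) * (v i)\<^sup>2 \<le> (if 2 \<le> i then 1 else 0) * (v i)\<^sup>2"
      by (intro mult_right_mono) auto
  qed
  show ?thesis using e lo hi by simp
qed

lemma rho_pow: "(\<lambda>k. \<rho>^(2*k) * Q v0) \<longlonglongrightarrow> 0"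
proof -
  have "(\<lambda>k. (\<rho>^2)^k) \<longlonglongrightarrow> 0"
    using rho_nonneg rho_lt1 by (intro LIMSEQ_power_zero) (simp add: abs_square_less_1)
  then have "(\<lambda>k. (\<rho>^2)^k * Q v0) \<longlonglongrightarrow> 0 * Q v0" by (intro tendsto_mult) auto
  then show ?thesis by (simp add: power_mult)
qed

lemma rho_pow1: "(\<lambda>k. \<rho>^(2*k+1) * Q v0) \<longlonglongrightarrow> 0"
proof -
  have "(\<lambda>k. \<rho> * (\<rho>^(2*k) * Q v0)) \<longlonglongrightarrow> \<rho> * 0" by (intro tendsto_mult rho_pow) auto
  then show ?thesis by (simp add: mult.assoc)
qed

lemma main:
  assumes v0n: "vinner n v0 v0 = 1" and v0h: "0 < Hs v0"
  shows "aci_alpha n M v0 \<longlonglongrightarrow> c 1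
       \<and> aci_beta n M v0 \<longlonglongrightarrow> c 1
       \<and> (\<forall>vs :: nat \<Rightarrow> real. \<forall>r :: nat \<Rightarrow> nat.
            strict_mono r \<and> (\<forall>i < n. (\<lambda>k. aci_v n M v0 (r k) i) \<longlonglongrightarrow> vs i)
            \<longrightarrow> (\<forall>i. 2 \<le> i \<and> i < n \<longrightarrow> vs i = 0) \<and> sqrt ((vs 0)^2 + (vs 1)^2) = 1)"
proof -
  note inv = invariant[OF v0n v0h]
  let ?v = "aci_v n M v0" and ?w = "aci_w n M v0"
  have Tv: "Ts (?v k) \<le> \<rho>^(2*k) * Q v0" for k
    using Ts_le_Q[of "?v k"] inv[of k] by linarith
  have Tw: "Ts (?w k) \<le> \<rho>^(2*k+1) * Q v0" for k
    using Ts_le_Q[of "?w k"] inv[of k] by linarith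
  have A: "aci_alpha n M v0 \<longlonglongrightarrow> c 1"
  proof (rule LIM_zero_cancel, rule null_comp[OF _ rho_pow], rule allI)
    fix k
    have "aci_alpha n M v0 k = (\<Sum>i<n. cidx m c i * (?v k i)^2)"
      by (simp add: aci_alpha_def aci_half_def Let_def rayleigh)
    then show "norm (aci_alpha n M v0 k - c 1) \<le> \<rho>^(2*k) * Q v0"
      using ray_bound[of "?v k"] inv[of k] Tv[of k] by simp
  qed
  have B: "aci_beta n M v0 \<longlonglongrightarrow> c 1"
  proof (rule LIM_zero_cancel, rule null_comp[OF _ rho_pow1], rule allI)
    fix k
    have "aci_beta n M v0 k = (\<Sum>i<n. cidx m c i * (?w k i)^2)"
      by (simp add: aci_beta_def rayleigh)
    then show "norm (aci_beta n M v0 k - c 1) \<le> \<rho>^(2*k+1) * Q v0"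
      using ray_bound[of "?w k"] inv[of k] Tw[of k] by simp
  qed
  have Tlim: "(\<lambda>k. Ts (?v k)) \<longlonglongrightarrow> 0"
    by (rule null_comp[OF _ rho_pow]) (use Tv Ts_nonneg in auto)
  have comp: "(\<lambda>k. (?v k i)^2) \<longlonglongrightarrow> 0" if "2 \<le> i" "i < n" for i
  proof (rule null_comp[OF _ Tlim], rule allI)
    fix k
    have "(if 2 \<le> i then 1 else 0) * (?v k i)^2 \<le> Ts (?v k)"
      unfolding Ts_def using that by (intro member_le_sum) auto
    then show "norm ((?v k i)^2) \<le> Ts (?v k)" using that by simp
  qed
  have Hlim: "(\<lambda>k. Hs (?v k)) \<longlonglongrightarrow> 1"
  proof -
    have "(\<lambda>k. 1 - Ts (?v k)) \<longlonglongrightarrow> 1 - 0" by (intro tendsto_diff Tlim) auto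
    moreover have "Hs (?v k) = 1 - Ts (?v k)" for k using HT[of "?v k"] inv[of k] by linarith
    ultimately show ?thesis by simp
  qed
  have L: "(\<forall>i. 2 \<le> i \<and> i < n \<longrightarrow> vs i = 0) \<and> sqrt ((vs 0)^2 + (vs 1)^2) = 1"
    if r: "strict_mono r" and lim: "\<forall>i < n. (\<lambda>k. ?v (r k) i) \<longlonglongrightarrow> vs i" for vs r
  proof
    show "\<forall>i. 2 \<le> i \<and> i < n \<longrightarrow> vs i = 0"
    proof (intro allI impI)
      fix i assume i: "2 \<le> i \<and> i < n"
      have "(\<lambda>k. (?v (r k) i)^2) \<longlonglongrightarrow> 0"
        using LIMSEQ_subseq_LIMSEQ[OF comp[of i] r] i by (simp add: o_def)
      moreover have "(\<lambda>k. (?v (r k) i)^2) \<longlonglongrightarrow> (vs i)^2"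
        using lim i by (intro tendsto_power) auto
      ultimately have "(vs i)^2 = 0" using LIMSEQ_unique by blast
      then show "vs i = 0" by simp
    qed
    have "(\<lambda>k. Hs (?v (r k))) \<longlonglongrightarrow> 1"
      using LIMSEQ_subseq_LIMSEQ[OF Hlim r] by (simp add: o_def)
    moreover have "(\<lambda>k. Hs (?v (r k))) \<longlonglongrightarrow> (vs 0)^2 + (vs 1)^2"
      unfolding Hs_eq using lim n_ge2 by (intro tendsto_add tendsto_power) auto
    ultimately have "(vs 0)^2 + (vs 1)^2 = 1" using LIMSEQ_unique by blast
    then show "sqrt ((vs 0)^2 + (vs 1)^2) = 1" by simp
  qed
  show ?thesis using A B L by blast
qed

end

theorem lemma4p5:
  fixes m :: nat and tr :: bool and c s :: "nat \<Rightarrow> real" and v0 :: "nat \<Rightarrow> real"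
  assumes m1: "m \<ge> 1"
    and cs: "\<And>j. j \<in> {1..m} \<Longrightarrow> (c j)^2 + (s j)^2 = 1"
    and snz: "\<And>j. j \<in> {1..m} \<Longrightarrow> s j \<noteq> 0"
    and c1pos: "0 < c 1"
    and cmono: "\<And>i j. i \<in> {1..m} \<Longrightarrow> j \<in> {1..m} \<Longrightarrow> i < j \<Longrightarrow> c i < c j"
    and unit: "vnorm (dimA m tr) v0 = 1"
    and grade2: "grade (dimA m tr) (blockA m tr c s) v0 \<ge> 2"
    and blk1: "(v0 0, v0 1) \<noteq> (0, 0)"
  shows "aci_alpha (dimA m tr) (blockA m tr c s) v0 \<longlonglongrightarrow> c 1
       \<and> aci_beta (dimA m tr) (blockA m tr c s) v0 \<longlonglongrightarrow> c 1
       \<and> (\<forall>vs :: nat \<Rightarrow> real. \<forall>r :: nat \<Rightarrow> nat.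
            strict_mono r \<and> (\<forall>i < dimA m tr. (\<lambda>k. aci_v (dimA m tr) (blockA m tr c s) v0 (r k) i) \<longlonglongrightarrow> vs i)
            \<longrightarrow> (\<forall>i. 2 \<le> i \<and> i < dimA m tr \<longrightarrow> vs i = 0) \<and> sqrt ((vs 0)^2 + (vs 1)^2) = 1)"
proof -
  interpret ctx m tr c s using m1 cs snz c1pos cmono by unfold_locales auto
  have v0n: "vinner (dimA m tr) v0 v0 = 1" using unit unfolding vnorm_def by simp
  have "0 < (v0 0)^2 + (v0 1)^2" using blk1
    by (metis add_nonneg_nonneg add_nonneg_eq_0_iff zero_le_power2 power_eq_0_iff zero_neq_numeral order_less_le prod.inject)
  then have v0h: "0 < Hs v0" by (simp add: Hs_eq)
  show ?thesis by (rule main[OF v0n v0h])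
qed

end
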